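(* Let $L\ge1$ be an integer and $r\in[0,\frac{L}{L+1})$. There exists $N=N(r,L)$ such that for all integers $q\ge 2$ with $L\le q$ and all $n\ge N$ with $rn\in\mathbb{N}$ and $rn\equiv L-1\pmod L$, every $(r,L)$ list-decodable code $C\subseteq[q]^n$ satisfies $|C|\le q^{\,n-\lfloor\frac{L+1}{L}rn\rfloor}$.
   Context: $[q]=\{1,\dots,q\}$. A code is a subset $C\subseteq[q]^n$. $B_t(v)$ denotes the Hamming ball of radius $t$ around $v\in[q]^n$ (Hamming distance = number of differing coordinates). A code $C$ is $(r,L)$ list-decodable if $|B_{rn}(v)\cap C|\le L$ for all $v\in[q]^n$. *)

theory Defs
  imports Main "HOL-Library.Cardinality" Complex_Main
begin

definition words :: "nat \<Rightarrow> nat \<Rightarrow> nat list set" where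
  "words q n = {v. length v = n \<and> set v \<subseteq> {1..q}}"

definition hamming_dist :: "nat list \<Rightarrow> nat list \<Rightarrow> nat" where
  "hamming_dist u v = card {i. i < length u \<and> u ! i \<noteq> v ! i}"

definition hamming_ball :: "nat \<Rightarrow> nat \<Rightarrow> real \<Rightarrow> nat list \<Rightarrow> nat list set" where
  "hamming_ball q n t v = {u \<in> words q n. real (hamming_dist u v) \<le> t}"

definition list_decodable :: "nat \<Rightarrow> nat \<Rightarrow> real \<Rightarrow> nat \<Rightarrow> nat list set \<Rightarrow> bool" where
  "list_decodable q n r L C \<longleftrightarrow>
     (\<forall>v \<in> words q n. card (hamming_ball q n (r * real n) v \<inter> C) \<le> L)"

end

theory Submission
  imports Defs
begin

lemma words_finite: "finite (words q n)" and words_card: "card (words q n) = q ^ n"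
proof -
  have e: "words q n = {xs. set xs \<subseteq> {1..q} \<and> length xs = n}" unfolding words_def by auto
  show "finite (words q n)" unfolding e by (rule finite_lists_length_eq) simp
  show "card (words q n) = q ^ n" unfolding e by (subst card_lists_length_eq) simp_all
qed

lemma take_words: "v \<in> words q n \<Longrightarrow> m \<le> n \<Longrightarrow> take m v \<in> words q m"
  unfolding words_def using set_take_subset by fastforce

lemma big_fiber:
  assumes C: "C \<subseteq> words q n" and sn: "s < n" and big: "card C > q ^ (s+1)"
  obtains F where "F \<subseteq> C" "card F > q" "\<And>z w. z \<in> F \<Longrightarrow> w \<in> F \<Longrightarrow> take s z = take s w"
proof -
  have finC: "finite C" using C words_finite finite_subset by blast
  define I where "I = take s ` C"
  define A where "A p = {z \<in> C. take s z = p}" for p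
  have I: "I \<subseteq> words q s" unfolding I_def using C take_words sn by fastforce
  have cI: "card I \<le> q ^ s" using card_mono[OF words_finite I] words_card by simp
  have finI: "finite I" unfolding I_def using finC by simp
  show ?thesis
  proof (rule ccontr)
    assume "\<not> ?thesis"
    then have le: "card (A p) \<le> q" for p
      using that unfolding A_def by (metis (mono_tags, lifting) leI mem_Collect_eq subsetI)
    have "C = (\<Union>p\<in>I. A p)" unfolding I_def A_def by auto
    then have "card C \<le> (\<Sum>p\<in>I. card (A p))" using card_UN_le[OF finI] by simp
    also have "\<dots> \<le> card I * q" using sum_bounded_above[of I "\<lambda>p. card (A p)" q] le by simp
    also have "\<dots> \<le> q ^ s * q" using cI by simp
    finally show False using big by (simp add: mult.commute)
  qed
qed

lemma word_nth: "z \<in> words q n \<Longrightarrow> i < n \<Longrightarrow> z ! i \<in> {1..q}"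
proof -
  assume z: "z \<in> words q n" and i: "i < n"
  have l: "length z = n" and sz: "set z \<subseteq> {1..q}" using z unfolding words_def by simp_all
  have "z ! i \<in> set z" using i l by (simp only: nth_mem)
  then show ?thesis using sz by blast
qed

lemma construct:
  assumes C: "C \<subseteq> words q n" and FC: "F \<subseteq> C" and cF: "card F > q" and qL: "L \<le> q" and L1: "L \<ge> 1"
    and tk: "\<And>z w. z \<in> F \<Longrightarrow> w \<in> F \<Longrightarrow> take s z = take s w"
    and n: "n = s + a*L + L + a" and rk: "real (a*L + L - 1) \<le> r * real n"
    and ld: "list_decodable q n r L C"
  shows False
proof -
  have Fw: "F \<subseteq> words q n" using FC C by (rule subset_trans)
  have finF: "finite F" by (rule finite_subset[OF Fw words_finite])
  have sn: "s < n" using n L1 by linarith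
  have "\<not> inj_on (\<lambda>z. z ! s) F"
  proof
    assume inj: "inj_on (\<lambda>z. z ! s) F"
    have "(\<lambda>z. z ! s) ` F \<subseteq> {1..q}"
    proof
      fix c assume "c \<in> (\<lambda>z. z ! s) ` F"
      then obtain z where "z \<in> F" "c = z ! s" by blast
      then show "c \<in> {1..q}" using Fw sn word_nth by blast
    qed
    from card_inj_on_le[OF inj this] cF show False by simp
  qed
  then obtain x y where xy: "x \<in> F" "y \<in> F" "x \<noteq> y" "x ! s = y ! s" unfolding inj_on_def by auto
  have cd: "card (F - {x, y}) = card F - card {x, y}" by (rule card_Diff_subset) (use xy finF in auto)
  have c2: "card {x, y} = 2" using xy(3) by simp
  have "L - 1 \<le> card (F - {x, y})" using cF qL cd c2 by linarith
  then obtain G where G: "G \<subseteq> F - {x,y}" "card G = L - 1" "finite G" by (rule obtain_subset_with_card_n)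
  obtain ys where ys: "set ys = G" "distinct ys" using finite_distinct_list[OF G(3)] by blast
  define ws where "ws = x # ys @ [y]"
  have lys: "length ys = L - 1" using ys(1) G(2) distinct_card[OF ys(2)] by simp
  have lxys: "length (x # ys) = L" using lys L1 by simp
  have lws: "length ws = L + 1" using lxys by (simp add: ws_def)
  have dws: "distinct ws" using ys G xy by (auto simp: ws_def)
  have sws: "set ws \<subseteq> F" using ys G xy by (auto simp: ws_def)
  have ws0: "ws ! 0 = x" by (simp add: ws_def)
  have wsa: "ws = (x # ys) @ [y]" by (simp add: ws_def)
  have wsL: "ws ! L = y" unfolding wsa using lxys by (metis nth_append_length)
  define v where "v = map (\<lambda>i. if i < s then x ! i else ws ! ((i - s) div (a+1)) ! i) [0..<n]"
  have idx: "(i - s) div (a+1) < length ws" if "s \<le> i" "i < n" for i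
  proof -
    have "i - s < (L+1) * (a+1)" using that n by (simp add: algebra_simps)
    then show ?thesis using lws by (simp add: less_mult_imp_div_less mult.commute)
  qed
  have vw: "v \<in> words q n"
    unfolding words_def
  proof (intro CollectI conjI subsetI)
    show "length v = n" by (simp add: v_def)
  next
    fix c assume "c \<in> set v"
    then obtain i where i: "i < n" "c = (if i < s then x ! i else ws ! ((i - s) div (a+1)) ! i)"
      by (auto simp: v_def)
    show "c \<in> {1..q}"
    proof (cases "i < s")
      case True
      then show ?thesis using i xy(1) Fw word_nth by auto
    next
      case False
      then have "ws ! ((i - s) div (a+1)) \<in> F" using idx[of i] i sws by (simp add: subset_iff)
      then have "ws ! ((i - s) div (a+1)) \<in> words q n" using Fw by blast
      then show ?thesis using i False word_nth by auto
    qed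
  qed
  have dist: "hamming_dist (ws ! t) v \<le> a*L + L - 1" if t: "t \<le> L" for t
  proof -
    define A where "A = (if t < L then {s + t*(a+1) ..< s + (t+1)*(a+1)} else insert s {s + L*(a+1) ..< n})"
    have wt: "ws ! t \<in> F" using t lws sws by (simp add: subset_iff)
    have lwt: "length (ws ! t) = n" using wt Fw words_def by auto
    have A: "A \<subseteq> {s..<n}"
    proof (cases "t < L")
      case True
      then have "(t+1)*(a+1) \<le> L*(a+1)" by (intro mult_right_mono) simp_all
      then have "s + (t+1)*(a+1) \<le> n" using n by (simp add: algebra_simps)
      then show ?thesis using True by (auto simp: A_def)
    next
      case False
      have "s < n" using n L1 by simp
      then show ?thesis using False by (auto simp: A_def)
    qed
    have cA: "card A = a + 1"
    proof (cases "t < L")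
      case True then show ?thesis by (simp add: A_def)
    next
      case False
      have "s \<notin> {s + L*(a+1) ..< n}" using L1 by simp
      then show ?thesis using False n by (simp add: A_def algebra_simps)
    qed
    have sub: "{i. i < length (ws ! t) \<and> ws ! t ! i \<noteq> v ! i} \<subseteq> {s..<n} - A"
    proof
      fix i assume "i \<in> {i. i < length (ws ! t) \<and> ws ! t ! i \<noteq> v ! i}"
      then have i: "i < length (ws ! t)" "ws ! t ! i \<noteq> v ! i" by simp_all
      have ilt: "i < n" using i lwt by simp
      have si: "s \<le> i"
      proof (rule ccontr)
        assume "\<not> s \<le> i"
        then have "i < s" by simp
        moreover have "take s (ws ! t) = take s x" using tk wt xy(1) by blast
        ultimately have "ws ! t ! i = x ! i" by (metis nth_take)
        then show False using i `i < s` ilt by (simp add: v_def)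
      qed
      have "i \<notin> A"
      proof
      assume iA: "i \<in> A"
      show False
      proof (cases "t < L")
        case True
        then have "s + t*(a+1) \<le> i" "i < s + (t+1)*(a+1)" using iA by (auto simp: A_def)
        then have "(i - s) div (a+1) = t"
          by (simp add: div_nat_eqI algebra_simps mult.commute)
        then show False using i ilt si by (simp add: v_def)
      next
        case False
        then have tL: "t = L" using t by simp
        show False
        proof (cases "i = s")
          case True
          then show False using i ilt tL ws0 wsL xy(4) by (simp add: v_def)
        next
          case False
          then have "s + L*(a+1) \<le> i" "i < n" using iA tL by (auto simp: A_def)
          moreover have "i - s < (L+1)*(a+1)" using ilt n by (simp add: algebra_simps)
          ultimately have "(i - s) div (a+1) = L"
            by (simp add: div_nat_eqI algebra_simps mult.commute)
          then show False using i ilt si tL by (simp add: v_def)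
        qed
      qed
      qed
      then show "i \<in> {s..<n} - A" using si ilt by simp
    qed
    have "hamming_dist (ws ! t) v \<le> card ({s..<n} - A)"
      unfolding hamming_dist_def by (rule card_mono) (simp_all add: sub)
    also have "\<dots> = (n - s) - (a+1)" using card_Diff_subset[OF finite_subset[OF A] A] cA by simp
    also have "\<dots> = a*L + L - 1" using n by simp
    finally show ?thesis .
  qed
  have "set ws \<subseteq> hamming_ball q n (r * real n) v \<inter> C"
  proof
    fix w assume "w \<in> set ws"
    then obtain t where t: "t < length ws" "w = ws ! t" by (auto simp: in_set_conv_nth)
    have "real (hamming_dist w v) \<le> r * real n" using dist[of t] t lws rk
      by (metis Suc_eq_plus1 less_Suc_eq_le of_nat_le_iff order_trans)
    moreover have "w \<in> words q n" using t sws Fw by (auto simp: subset_iff)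
    ultimately show "w \<in> hamming_ball q n (r * real n) v \<inter> C" using t sws FC
      by (auto simp: hamming_ball_def subset_iff)
  qed
  then have "card (set ws) \<le> card (hamming_ball q n (r * real n) v \<inter> C)"
    by (rule card_mono[rotated]) (use C words_finite finite_subset in blast)
  moreover have "card (hamming_ball q n (r * real n) v \<inter> C) \<le> L" using ld vw by (simp add: list_decodable_def)
  ultimately show False using distinct_card[OF dws] lws by simp
qed

theorem corollary3p3:
  fixes L :: nat and r :: real
  assumes "L \<ge> 1" and "0 \<le> r" and "r < real L / (real L + 1)"
  shows "\<exists>N::nat. \<forall>q n k C. q \<ge> 2 \<longrightarrow> L \<le> q \<longrightarrow> n \<ge> N \<longrightarrow>
           r * real n = real k \<longrightarrow> k mod L = (L - 1) mod L \<longrightarrow>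
           C \<subseteq> words q n \<longrightarrow> list_decodable q n r L C \<longrightarrow>
           card C \<le> q ^ (n - nat \<lfloor>(real L + 1) / real L * real k\<rfloor>)"
proof (intro exI[of _ 1] allI impI)
  fix q n k C
  assume q2: "q \<ge> 2" and qL: "L \<le> q" and n1: "n \<ge> (1::nat)" and rk: "r * real n = real k"
    and km: "k mod L = (L - 1) mod L" and C: "C \<subseteq> words q n" and ld: "list_decodable q n r L C"
  define a where "a = k div L"
  have L1: "L \<ge> 1" using assms by simp
  have kmod: "k mod L = L - 1" using km L1 by simp
  have ka: "k = a * L + L - 1" using div_mult_mod_eq[of k L] kmod L1 unfolding a_def by simp
  have "real ((L+1) * k) < real (n * L)"
  proof -
    have "real ((L+1) * k) = (real L + 1) * (r * real n)" using rk by (simp add: algebra_simps)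
    also have "\<dots> < (real L + 1) * (real L / (real L + 1) * real n)"
    proof (rule mult_strict_left_mono)
      show "r * real n < real L / (real L + 1) * real n"
        using assms(3) n1 by (intro mult_strict_right_mono) simp_all
    qed simp
    also have "\<dots> = real (n * L)" by (simp add: field_simps)
    finally show ?thesis .
  qed
  then have lt: "(L+1) * k < n * L" by linarith
  have "L * (k + a + 1) \<le> L * n"
  proof -
    have "L * (k + a + 1) = L*k + (a*L + L)" by (simp add: algebra_simps)
    also have "\<dots> = L * k + k + 1" using ka L1 by simp
    finally show ?thesis using lt by (simp add: algebra_simps)
  qed
  then have kn: "k + a + 1 \<le> n" using L1 by (subst (asm) mult_le_cancel1) simp
  define s where "s = n - (k + a + 1)"
  have n: "n = s + a*L + L + a" using kn ka L1 unfolding s_def by simp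
  have k1: "k + 1 = a * L + L" using ka L1 by linarith
  have rka: "real k + 1 = real a * real L + real L" using arg_cong[OF k1, of real] by simp
  have Lpos: "real L > 0" using L1 by simp
  have e1: "(real L + 1) * real k = real (k+a) * real L + (real L - 1)"
    using rka by (simp add: algebra_simps)
  have e2: "(real L + 1) / real L * real k = real (k + a) + (real L - 1) / real L"
  proof -
    have "(real L + 1) / real L * real k = ((real L + 1) * real k) / real L" by simp
    also have "\<dots> = (real (k+a) * real L + (real L - 1)) / real L" using e1 by simp
    also have "\<dots> = real (k + a) + (real L - 1) / real L" using Lpos by (simp add: add_divide_distrib)
    finally show ?thesis .
  qed
  have d0: "0 \<le> (real L - 1) / real L" using L1 by simp
  have d1: "(real L - 1) / real L < 1" using Lpos by simp
  have "\<lfloor>(real L + 1) / real L * real k\<rfloor> = int (k + a)"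
    unfolding e2 by (rule floor_unique) (use d0 d1 in simp_all)
  then have fl: "nat \<lfloor>(real L + 1) / real L * real k\<rfloor> = k + a" by simp
  show "card C \<le> q ^ (n - nat \<lfloor>(real L + 1) / real L * real k\<rfloor>)"
  proof (rule ccontr)
    assume "\<not> ?thesis"
    moreover have "n - (k + a) = s + 1" unfolding s_def using kn by simp
    ultimately have big: "card C > q ^ (s + 1)" unfolding fl by simp
    have sn: "s < n" using n L1 by simp
    obtain F where "F \<subseteq> C" "card F > q" "\<And>z w. z \<in> F \<Longrightarrow> w \<in> F \<Longrightarrow> take s z = take s w"
      using big_fiber[OF C sn big] by blast
    note F = this
    have rk2: "real (a*L + L - 1) \<le> r * real n" using rk ka by simp
    show False by (rule construct[OF C F(1,2) qL L1 F(3) n rk2 ld])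
  qed
qed

end
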